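(* Let $G$ and $H$ be finite simple graphs with $\gamma_{sR}(G)\geq 0$ and $\gamma_{sR}(H)\geq 0$. Then $\gamma_{sR}(G\vee H)\leq \gamma_{sR}(G)+\gamma_{sR}(H)$.
   Context: For a graph $G=(V,E)$ and $x\in V$, $N_G[x]=\{x\}\cup\{y: xy\in E\}$. A signed Roman dominating function (SRDF) on $G$ is a function $f:V\to\{-1,1,2\}$ such that (a) $\sum_{y\in N_G[x]}f(y)\geq 1$ for every $x\in V$, and (b) every vertex $x$ with $f(x)=-1$ is adjacent to at least one vertex $y$ with $f(y)=2$. The weight of $f$ is $\sum_{x\in V}f(x)$, and $\gamma_{sR}(G)$ is the minimum weight of an SRDF on $G$. The join $G_1\vee G_2$ of two graphs has vertex set $V(G_1)\cup V(G_2)$ (disjoint union) and edge set $E(G_1)\cup E(G_2)\cup\{uv: u\in V(G_1), v\in V(G_2)\}$. *)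

theory Defs
  imports Main
begin

definition simple_graph :: "'a set \<Rightarrow> ('a \<Rightarrow> 'a \<Rightarrow> bool) \<Rightarrow> bool" where
  "simple_graph V E \<longleftrightarrow> finite V \<and> (\<forall>x y. E x y \<longrightarrow> x \<in> V \<and> y \<in> V)
     \<and> (\<forall>x y. E x y \<longrightarrow> E y x) \<and> (\<forall>x. \<not> E x x)"

definition closed_nbhd :: "'a set \<Rightarrow> ('a \<Rightarrow> 'a \<Rightarrow> bool) \<Rightarrow> 'a \<Rightarrow> 'a set" where
  "closed_nbhd V E x = {y \<in> V. y = x \<or> E x y}"

definition is_SRDF :: "'a set \<Rightarrow> ('a \<Rightarrow> 'a \<Rightarrow> bool) \<Rightarrow> ('a \<Rightarrow> int) \<Rightarrow> bool" where
  "is_SRDF V E f \<longleftrightarrow>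
     (\<forall>x\<in>V. f x \<in> {-1, 1, 2}) \<and>
     (\<forall>x\<in>V. (\<Sum>y\<in>closed_nbhd V E x. f y) \<ge> 1) \<and>
     (\<forall>x\<in>V. f x = -1 \<longrightarrow> (\<exists>y\<in>V. E x y \<and> f y = 2))"

definition gamma_sR :: "'a set \<Rightarrow> ('a \<Rightarrow> 'a \<Rightarrow> bool) \<Rightarrow> int" where
  "gamma_sR V E = Min ((\<lambda>f. \<Sum>x\<in>V. f x) ` {f. is_SRDF V E f})"

definition join_V :: "'a set \<Rightarrow> 'b set \<Rightarrow> ('a + 'b) set" where
  "join_V V1 V2 = Inl ` V1 \<union> Inr ` V2"

fun join_E :: "('a set \<times> ('a \<Rightarrow> 'a \<Rightarrow> bool)) \<Rightarrow> ('b set \<times> ('b \<Rightarrow> 'b \<Rightarrow> bool))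
      \<Rightarrow> ('a + 'b) \<Rightarrow> ('a + 'b) \<Rightarrow> bool" where
  "join_E (V1, E1) (V2, E2) (Inl a) (Inl b) = E1 a b"
| "join_E (V1, E1) (V2, E2) (Inr a) (Inr b) = E2 a b"
| "join_E (V1, E1) (V2, E2) (Inl a) (Inr b) = (a \<in> V1 \<and> b \<in> V2)"
| "join_E (V1, E1) (V2, E2) (Inr a) (Inl b) = (a \<in> V2 \<and> b \<in> V1)"

end

theory Submission
  imports Defs
begin

lemma weights_finite:
  assumes "finite V"
  shows "finite ((\<lambda>f. \<Sum>x\<in>V. f x) ` {f. is_SRDF V E f})"
proof -
  have "(\<lambda>f. \<Sum>x\<in>V. f x) ` {f. is_SRDF V E f} \<subseteq> {-(int (card V)) .. 2 * int (card V)}"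
  proof
    fix w assume "w \<in> (\<lambda>f. \<Sum>x\<in>V. f x) ` {f. is_SRDF V E f}"
    then obtain f where f: "is_SRDF V E f" and w: "w = (\<Sum>x\<in>V. f x)" by auto
    have r: "\<forall>x\<in>V. f x \<in> {-1,1,2}" using f unfolding is_SRDF_def by blast
    have "(\<Sum>x\<in>V. (-1::int)) \<le> (\<Sum>x\<in>V. f x)" by (rule sum_mono) (use r in auto)
    moreover have "(\<Sum>x\<in>V. f x) \<le> (\<Sum>x\<in>V. (2::int))" by (rule sum_mono) (use r in auto)
    ultimately show "w \<in> {-(int (card V)) .. 2 * int (card V)}" using w by auto
  qed
  thus ?thesis by (rule finite_subset) simp
qed

lemma gamma_le:
  assumes "finite V" "is_SRDF V E f"
  shows "gamma_sR V E \<le> (\<Sum>x\<in>V. f x)"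
  unfolding gamma_sR_def using weights_finite[OF assms(1)] assms(2) by (auto intro: Min_le)

lemma gamma_attained:
  assumes "finite V"
  shows "\<exists>f. is_SRDF V E f \<and> gamma_sR V E = (\<Sum>x\<in>V. f x)"
proof -
  have ex: "is_SRDF V E (\<lambda>_. 1)"
  proof -
    have "(\<Sum>y\<in>closed_nbhd V E x. (1::int)) \<ge> 1" if "x \<in> V" for x
    proof -
      have "x \<in> closed_nbhd V E x" using that unfolding closed_nbhd_def by auto
      moreover have "finite (closed_nbhd V E x)" using assms unfolding closed_nbhd_def by auto
      ultimately show ?thesis by (auto simp: card_gt_0_iff Suc_le_eq)
    qed
    thus ?thesis unfolding is_SRDF_def by auto
  qed
  have "gamma_sR V E \<in> (\<lambda>f. \<Sum>x\<in>V. f x) ` {f. is_SRDF V E f}"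
    unfolding gamma_sR_def using weights_finite[OF assms] ex by (intro Min_in) auto
  thus ?thesis by auto
qed

theorem mainTheorem3:
  fixes V1 :: "'a set" and E1 :: "'a \<Rightarrow> 'a \<Rightarrow> bool"
    and V2 :: "'b set" and E2 :: "'b \<Rightarrow> 'b \<Rightarrow> bool"
  assumes "simple_graph V1 E1" and "simple_graph V2 E2"
    and "gamma_sR V1 E1 \<ge> 0" and "gamma_sR V2 E2 \<ge> 0"
  shows "gamma_sR (join_V V1 V2) (join_E (V1, E1) (V2, E2))
           \<le> gamma_sR V1 E1 + gamma_sR V2 E2"
proof -
  have fin1: "finite V1" and fin2: "finite V2" using assms(1,2) unfolding simple_graph_def by auto
  obtain f1 where f1: "is_SRDF V1 E1 f1" and w1: "gamma_sR V1 E1 = (\<Sum>x\<in>V1. f1 x)"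
    using gamma_attained[OF fin1] by blast
  obtain f2 where f2: "is_SRDF V2 E2 f2" and w2: "gamma_sR V2 E2 = (\<Sum>x\<in>V2. f2 x)"
    using gamma_attained[OF fin2] by blast
  define V where "V = join_V V1 V2"
  define E where "E = join_E (V1, E1) (V2, E2)"
  define f where "f = case_sum f1 f2"
  have finV: "finite V" unfolding V_def join_V_def using fin1 fin2 by auto
  have wsum: "(\<Sum>x\<in>V. f x) = (\<Sum>x\<in>V1. f1 x) + (\<Sum>x\<in>V2. f2 x)"
    unfolding V_def join_V_def f_def
    by (subst sum.union_disjoint) (auto simp: fin1 fin2 sum.reindex)
  have nL: "closed_nbhd V E (Inl a) = Inl ` closed_nbhd V1 E1 a \<union> Inr ` V2" if "a \<in> V1" for a
  proof (rule set_eqI)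
    fix y show "y \<in> closed_nbhd V E (Inl a) \<longleftrightarrow> y \<in> Inl ` closed_nbhd V1 E1 a \<union> Inr ` V2"
      using that by (cases y) (auto simp: closed_nbhd_def V_def E_def join_V_def)
  qed
  have nR: "closed_nbhd V E (Inr a) = Inl ` V1 \<union> Inr ` closed_nbhd V2 E2 a" if "a \<in> V2" for a
  proof (rule set_eqI)
    fix y show "y \<in> closed_nbhd V E (Inr a) \<longleftrightarrow> y \<in> Inl ` V1 \<union> Inr ` closed_nbhd V2 E2 a"
      using that by (cases y) (auto simp: closed_nbhd_def V_def E_def join_V_def)
  qed
  have fn1: "finite (closed_nbhd V1 E1 a)" for a using fin1 unfolding closed_nbhd_def by auto
  have fn2: "finite (closed_nbhd V2 E2 a)" for a using fin2 unfolding closed_nbhd_def by auto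
  have "is_SRDF V E f"
    unfolding is_SRDF_def
  proof (intro conjI ballI impI)
    fix x assume "x \<in> V"
    thus "f x \<in> {-1,1,2}" using f1 f2 unfolding is_SRDF_def V_def join_V_def f_def by auto
  next
    fix x assume x: "x \<in> V"
    show "(\<Sum>y\<in>closed_nbhd V E x. f y) \<ge> 1"
    proof (cases x)
      case (Inl a)
      with x have a: "a \<in> V1" unfolding V_def join_V_def by auto
      have "(\<Sum>y\<in>closed_nbhd V E x. f y) = (\<Sum>y\<in>closed_nbhd V1 E1 a. f1 y) + (\<Sum>y\<in>V2. f2 y)"
        unfolding Inl nL[OF a] f_def
        by (subst sum.union_disjoint) (auto simp: fn1 fin2 sum.reindex)
      moreover have "(\<Sum>y\<in>closed_nbhd V1 E1 a. f1 y) \<ge> 1" using f1 a unfolding is_SRDF_def by auto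
      ultimately show ?thesis using assms(4) w2 by linarith
    next
      case (Inr a)
      with x have a: "a \<in> V2" unfolding V_def join_V_def by auto
      have "(\<Sum>y\<in>closed_nbhd V E x. f y) = (\<Sum>y\<in>V1. f1 y) + (\<Sum>y\<in>closed_nbhd V2 E2 a. f2 y)"
        unfolding Inr nR[OF a] f_def
        by (subst sum.union_disjoint) (auto simp: fin1 fn2 sum.reindex)
      moreover have "(\<Sum>y\<in>closed_nbhd V2 E2 a. f2 y) \<ge> 1" using f2 a unfolding is_SRDF_def by auto
      ultimately show ?thesis using assms(3) w1 by linarith
    qed
  next
    fix x assume x: "x \<in> V" and m: "f x = -1"
    show "\<exists>y\<in>V. E x y \<and> f y = 2"
    proof (cases x)
      case (Inl a)
      with x have a: "a \<in> V1" unfolding V_def join_V_def by auto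
      with m Inl f1 obtain b where "b \<in> V1" "E1 a b" "f1 b = 2"
        unfolding is_SRDF_def f_def by auto
      thus ?thesis using Inl by (intro bexI[of _ "Inl b"]) (auto simp: V_def E_def f_def join_V_def)
    next
      case (Inr a)
      with x have a: "a \<in> V2" unfolding V_def join_V_def by auto
      with m Inr f2 obtain b where "b \<in> V2" "E2 a b" "f2 b = 2"
        unfolding is_SRDF_def f_def by auto
      thus ?thesis using Inr by (intro bexI[of _ "Inr b"]) (auto simp: V_def E_def f_def join_V_def)
    qed
  qed
  hence "gamma_sR V E \<le> (\<Sum>x\<in>V. f x)" using gamma_le[OF finV] by blast
  thus ?thesis using wsum w1 w2 unfolding V_def E_def by simp
qed

end
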